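(* Let $p_1,\dots,p_n\ge0$ and unit vectors $\vec a_1,\dots,\vec a_n\in\mathbb{R}^3$ with $\sum_ip_i=2$, $\sum_ip_i\vec a_i=\vec0$, and suppose all $\vec a_i$ lie in a common plane through the origin (this is automatic when $n=3$). Let $f(\vec x)=\sum_ip_i\Theta(\vec x\cdot\vec a_i)$. Choose coordinates with the $z$-axis orthogonal to that plane. Then there is a rotation $R$ about the $z$-axis by an angle in $[0,\pi/2]$ such that $f(R\vec v_{s_xs_ys_z})\le1$ for all $(s_x,s_y,s_z)\in\{\pm1\}^3$.
   Context: $\Theta(x)=x$ for $x\ge0$ and $0$ for $x<0$; $\vec v_{s_xs_ys_z}=(s_x,s_y,s_z)^T$. *)

theory Defs
  imports "HOL-Analysis.Analysis"
begin

definition Theta :: "real \<Rightarrow> real" where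
  "Theta x = (if x \<ge> 0 then x else 0)"

definition vsign :: "real \<Rightarrow> real \<Rightarrow> real \<Rightarrow> real^3" where
  "vsign sx sy sz = vector [sx, sy, sz]"

definition rotz :: "real \<Rightarrow> real^3 \<Rightarrow> real^3" where
  "rotz t v = vector [cos t * v$1 - sin t * v$2, sin t * v$1 + cos t * v$2, v$3]"

end

theory Submission
  imports Defs
begin

lemma Theta_alt: "Theta x = (x + \<bar>x\<bar>) / 2"
  by (simp add: Theta_def)

lemma abs_pm_le: fixes x y :: real assumes "x^2 + y^2 = 1"
  shows "\<bar>x + y\<bar> + \<bar>x - y\<bar> \<le> 2"
proof -
  have "x^2 \<le> 1" "y^2 \<le> 1" using assms by (smt (verit) zero_le_power2)+
  hence "\<bar>x\<bar> \<le> 1" "\<bar>y\<bar> \<le> 1" by (simp_all add: abs_square_le_1)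
  thus ?thesis by linarith
qed

theorem mainTheorem9:
  fixes n :: nat and p :: "nat \<Rightarrow> real" and a :: "nat \<Rightarrow> real^3"
  assumes p_nonneg: "\<And>i. i < n \<Longrightarrow> p i \<ge> 0"
    and a_unit: "\<And>i. i < n \<Longrightarrow> norm (a i) = 1"
    and p_sum: "(\<Sum>i<n. p i) = 2"
    and balanced: "(\<Sum>i<n. p i *\<^sub>R a i) = 0"
    and planar: "\<And>i. i < n \<Longrightarrow> a i $ 3 = 0"
  shows "\<exists>t. 0 \<le> t \<and> t \<le> pi / 2 \<and>
           (\<forall>sx \<in> {-1, 1}. \<forall>sy \<in> {-1, 1}. \<forall>sz \<in> {-1, 1}.
              (\<Sum>i<n. p i * Theta (rotz t (vsign sx sy sz) \<bullet> a i)) \<le> 1)"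
proof -
  define c where "c i = a i $ 1" for i
  define s where "s i = a i $ 2" for i
  define A where "A t i = cos t * c i + sin t * s i" for t i
  define B where "B t i = cos t * s i - sin t * c i" for t i
  have C0: "(\<Sum>i<n. p i * c i) = 0"
    using arg_cong[OF balanced, of "\<lambda>v. v $ 1"] by (simp add: c_def)
  have S0: "(\<Sum>i<n. p i * s i) = 0"
    using arg_cong[OF balanced, of "\<lambda>v. v $ 2"] by (simp add: s_def)
  have cs1: "c i ^ 2 + s i ^ 2 = 1" if "i < n" for i
  proof -
    have "a i \<bullet> a i = 1" using a_unit[OF that] by (simp add: power2_norm_eq_inner[symmetric])
    thus ?thesis using planar[OF that]
      by (simp add: inner_vec_def sum_3 c_def s_def power2_eq_square)
  qed
  have AB1: "(A t i)^2 + (B t i)^2 = 1" if "i < n" for t i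
  proof -
    have "(A t i)^2 + (B t i)^2 = (c i ^ 2 + s i ^ 2) * ((sin t)^2 + (cos t)^2)"
      unfolding A_def B_def by algebra
    thus ?thesis using cs1[OF that] by simp
  qed
  have dot: "rotz t (vsign sx sy sz) \<bullet> a i = sx * A t i + sy * B t i" if "i < n" for t sx sy sz i
    using planar[OF that]
    by (simp add: rotz_def vsign_def inner_vec_def sum_3 A_def B_def c_def s_def algebra_simps)
  have lin: "(\<Sum>i<n. p i * (sx * A t i + sy * B t i)) = 0" for t sx sy
  proof -
    have "(\<Sum>i<n. p i * (sx * A t i + sy * B t i))
       = (sx * cos t - sy * sin t) * (\<Sum>i<n. p i * c i) + (sx * sin t + sy * cos t) * (\<Sum>i<n. p i * s i)"
      by (simp add: A_def B_def sum_distrib_left sum.distrib[symmetric] algebra_simps)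
    thus ?thesis using C0 S0 by simp
  qed
  define P where "P t = (\<Sum>i<n. p i * \<bar>A t i + B t i\<bar>)" for t
  define M where "M t = (\<Sum>i<n. p i * \<bar>A t i - B t i\<bar>)" for t
  have f_eq: "(\<Sum>i<n. p i * Theta (rotz t (vsign sx sy sz) \<bullet> a i))
      = (\<Sum>i<n. p i * \<bar>sx * A t i + sy * B t i\<bar>) / 2" for t sx sy sz
  proof -
    have "(\<Sum>i<n. p i * Theta (rotz t (vsign sx sy sz) \<bullet> a i))
       = (\<Sum>i<n. (p i * (sx * A t i + sy * B t i) + p i * \<bar>sx * A t i + sy * B t i\<bar>) / 2)"
      by (rule sum.cong) (simp_all add: dot Theta_alt algebra_simps)
    also have "\<dots> = ((\<Sum>i<n. p i * (sx * A t i + sy * B t i)) + (\<Sum>i<n. p i * \<bar>sx * A t i + sy * B t i\<bar>)) / 2"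
      by (simp add: sum_divide_distrib[symmetric] sum.distrib)
    finally show ?thesis using lin by simp
  qed
  have PM: "P t + M t \<le> 4" for t
  proof -
    have "P t + M t = (\<Sum>i<n. p i * (\<bar>A t i + B t i\<bar> + \<bar>A t i - B t i\<bar>))"
      by (simp add: P_def M_def sum.distrib[symmetric] algebra_simps)
    also have "\<dots> \<le> (\<Sum>i<n. p i * 2)"
      by (rule sum_mono) (simp add: mult_left_mono abs_pm_le AB1 p_nonneg)
    also have "\<dots> = 4" using p_sum by (simp add: sum_distrib_right[symmetric])
    finally show ?thesis .
  qed
  define D where "D t = P t - M t" for t
  have cont: "isCont D t" for t
    unfolding D_def P_def M_def A_def B_def by (intro continuous_intros)
  have P0: "P (pi/2) = M 0" and M0: "M (pi/2) = P 0"
    by (simp_all add: P_def M_def A_def B_def algebra_simps abs_minus_commute)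
  have "\<exists>t. 0 \<le> t \<and> t \<le> pi/2 \<and> D t = 0"
  proof (cases "D 0 \<le> 0")
    case True
    have "0 \<le> D (pi/2)" using True P0 M0 by (simp add: D_def)
    thus ?thesis using IVT[of D 0 0 "pi/2"] True cont by auto
  next
    case False
    have "D (pi/2) \<le> 0" using False P0 M0 by (simp add: D_def)
    thus ?thesis using IVT2[of D "pi/2" 0 0] False cont by auto
  qed
  then obtain t where t: "0 \<le> t" "t \<le> pi/2" "P t = M t" by (auto simp: D_def)
  have Pt: "P t \<le> 2" "M t \<le> 2" using PM[of t] t(3) by linarith+
  show ?thesis
  proof (intro exI[of _ t] conjI t(1) t(2) ballI)
    fix sx sy sz :: real assume sx: "sx \<in> {-1,1}" and sy: "sy \<in> {-1,1}" and "sz \<in> {-1,1}"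
    have "(\<Sum>i<n. p i * \<bar>sx * A t i + sy * B t i\<bar>) \<le> 2"
    proof -
      have "(\<Sum>i<n. p i * \<bar>sx * A t i + sy * B t i\<bar>) = P t \<or>
            (\<Sum>i<n. p i * \<bar>sx * A t i + sy * B t i\<bar>) = M t"
        using sx sy by (auto simp: P_def M_def abs_minus_commute intro!: sum.cong)
      thus ?thesis using Pt by auto
    qed
    thus "(\<Sum>i<n. p i * Theta (rotz t (vsign sx sy sz) \<bullet> a i)) \<le> 1"
      by (simp add: f_eq)
  qed
qed

end
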